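(* Let $P\subset\mathbb{R}^d$ be a polytope, let $0<\gamma<1$, and let $\mathcal{X}=\{\mathbf{x}\in\mathbb{R}^d:\|\mathbf{x}\|\le1\}$. Suppose $P^{[-\gamma]}\cap\mathcal{X}\neq\emptyset$. Then $\partial P^{[\gamma^2/2]}\cap\mathcal{X}\subseteq\partial P^{(\gamma)}$.
   Context: Write $P=\{\mathbf{x}:\mathbf{w}_i\cdot\mathbf{x}+b_i\ge0\ \forall i\}$ where the halfspaces $\{\mathbf{w}_i\cdot\mathbf{x}+b_i\ge0\}$, $\|\mathbf{w}_i\|=1$, are those defining the facets of $P$. For $\alpha>0$: $P^{[+\alpha]}=\{\mathbf{x}:\mathbf{w}_i\cdot\mathbf{x}+b_i\ge-\alpha\ \forall i\}$ (each facet halfspace moved outward by $\alpha$), $P^{[-\alpha]}=\{\mathbf{x}:\mathbf{w}_i\cdot\mathbf{x}+b_i\ge\alpha\ \forall i\}$ (moved inward by $\alpha$). With $B_\alpha=\{\mathbf{p}:\|\mathbf{p}\|\le\alpha\}$, $P^{(+\alpha)}=P+B_\alpha$ (Minkowski sum) and $P^{(-\alpha)}=P-B_\alpha=\{\mathbf{p}:\{\mathbf{p}\}+B_\alpha\subseteq P\}$. The $\alpha$-margin of $P$ is $\partial P^{[\alpha]}=P^{[+\alpha]}\setminus P^{[-\alpha]}$ and the $\alpha$-envelope of $P$ is $\partial P^{(\alpha)}=P^{(+\alpha)}\setminus P^{(-\alpha)}$. *)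

theory Defs
  imports "HOL-Analysis.Analysis"
begin

definition facet_rep :: "'i set \<Rightarrow> ('i \<Rightarrow> 'a::euclidean_space) \<Rightarrow> ('i \<Rightarrow> real) \<Rightarrow> 'a set \<Rightarrow> bool" where
  "facet_rep I w b P \<longleftrightarrow>
     finite I \<and>
     (\<forall>i\<in>I. norm (w i) = 1) \<and>
     P = {x. \<forall>i\<in>I. w i \<bullet> x + b i \<ge> 0} \<and>
     (\<forall>i\<in>I. (P \<inter> {x. w i \<bullet> x + b i = 0}) facet_of P) \<and>
     (\<forall>F. F facet_of P \<longrightarrow> (\<exists>i\<in>I. F = P \<inter> {x. w i \<bullet> x + b i = 0}))"

text \<open>P^[+alpha]: facet halfspaces moved outward by alpha.\<close>
definition shift_out :: "'i set \<Rightarrow> ('i \<Rightarrow> 'a::euclidean_space) \<Rightarrow> ('i \<Rightarrow> real) \<Rightarrow> real \<Rightarrow> 'a set" where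
  "shift_out I w b \<alpha> = {x. \<forall>i\<in>I. w i \<bullet> x + b i \<ge> - \<alpha>}"

text \<open>P^[-alpha]: facet halfspaces moved inward by alpha.\<close>
definition shift_in :: "'i set \<Rightarrow> ('i \<Rightarrow> 'a::euclidean_space) \<Rightarrow> ('i \<Rightarrow> real) \<Rightarrow> real \<Rightarrow> 'a set" where
  "shift_in I w b \<alpha> = {x. \<forall>i\<in>I. w i \<bullet> x + b i \<ge> \<alpha>}"

definition margin :: "'i set \<Rightarrow> ('i \<Rightarrow> 'a::euclidean_space) \<Rightarrow> ('i \<Rightarrow> real) \<Rightarrow> real \<Rightarrow> 'a set" where
  "margin I w b \<alpha> = shift_out I w b \<alpha> - shift_in I w b \<alpha>"

text \<open>P^(+alpha) = P + B_alpha (Minkowski sum).\<close>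
definition mink_out :: "'a::euclidean_space set \<Rightarrow> real \<Rightarrow> 'a set" where
  "mink_out P \<alpha> = {x + y | x y. x \<in> P \<and> norm y \<le> \<alpha>}"

text \<open>P^(-alpha) = {p. {p} + B_alpha subset of P}.\<close>
definition mink_in :: "'a::euclidean_space set \<Rightarrow> real \<Rightarrow> 'a set" where
  "mink_in P \<alpha> = {p. \<forall>y. norm y \<le> \<alpha> \<longrightarrow> p + y \<in> P}"

definition envelope :: "'a::euclidean_space set \<Rightarrow> real \<Rightarrow> 'a set" where
  "envelope P \<alpha> = mink_out P \<alpha> - mink_in P \<alpha>"

end

theory Submission
  imports Defs
begin

theorem theorem11:
  fixes P :: "'a::euclidean_space set"
    and I :: "'i set" and w :: "'i \<Rightarrow> 'a" and b :: "'i \<Rightarrow> real"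
    and \<gamma> :: real
  assumes "polytope P"
    and "facet_rep I w b P"
    and "0 < \<gamma>" and "\<gamma> < 1"
    and "shift_in I w b \<gamma> \<inter> {x. norm x \<le> 1} \<noteq> {}"
  shows "margin I w b (\<gamma>\<^sup>2 / 2) \<inter> {x. norm x \<le> 1} \<subseteq> envelope P \<gamma>"
proof
  fix x assume xm: "x \<in> margin I w b (\<gamma>\<^sup>2 / 2) \<inter> {x. norm x \<le> 1}"
  have Pd: "P = {x. \<forall>i\<in>I. w i \<bullet> x + b i \<ge> 0}" and wn: "\<And>i. i \<in> I \<Longrightarrow> norm (w i) = 1"
    using assms(2) unfolding facet_rep_def by auto
  obtain z where zin: "\<And>i. i \<in> I \<Longrightarrow> w i \<bullet> z + b i \<ge> \<gamma>" and zn: "norm z \<le> 1"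
    using assms(5) unfolding shift_in_def by auto
  have xo: "\<And>i. i \<in> I \<Longrightarrow> w i \<bullet> x + b i \<ge> - (\<gamma>\<^sup>2 / 2)"
    using xm unfolding margin_def shift_out_def by auto
  obtain j where j: "j \<in> I" "w j \<bullet> x + b j < \<gamma>\<^sup>2 / 2"
    using xm unfolding margin_def shift_in_def by auto
  have xn: "norm x \<le> 1" using xm by auto
  define t where "t = \<gamma> / 2"
  define y where "y = (1 - t) *\<^sub>R x + t *\<^sub>R z"
  have yP: "y \<in> P"
  proof -
    have "w i \<bullet> y + b i \<ge> 0" if i: "i \<in> I" for i
    proof -
      have eq: "w i \<bullet> y + b i = (1 - t) * (w i \<bullet> x + b i) + t * (w i \<bullet> z + b i)"
        unfolding y_def by (simp add: inner_add_right algebra_simps)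
      have t0: "0 \<le> 1 - t" "0 \<le> t" using assms(3,4) unfolding t_def by auto
      have "(1 - t) * (w i \<bullet> x + b i) \<ge> (1 - t) * (- (\<gamma>\<^sup>2 / 2))"
        using mult_left_mono[OF xo[OF i] t0(1)] .
      moreover have "t * (w i \<bullet> z + b i) \<ge> t * \<gamma>"
        using mult_left_mono[OF zin[OF i] t0(2)] .
      moreover have "(1 - t) * (- (\<gamma>\<^sup>2 / 2)) + t * \<gamma> \<ge> 0"
        unfolding t_def using assms(3,4) by (simp add: power2_eq_square algebra_simps)
      ultimately show ?thesis using eq by linarith
    qed
    then show ?thesis using Pd by auto
  qed
  have "x - y = t *\<^sub>R (x - z)" unfolding y_def by (simp add: algebra_simps)
  hence "norm (x - y) = t * norm (x - z)" using assms(3) unfolding t_def by simp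
  also have "\<dots> \<le> t * 2"
    using norm_triangle_ineq4[of x z] xn zn assms(3) unfolding t_def
    by (intro mult_left_mono) auto
  finally have d: "norm (x - y) \<le> \<gamma>" unfolding t_def by simp
  have "x \<in> mink_out P \<gamma>" unfolding mink_out_def
    using yP d by (intro CollectI exI[of _ y] exI[of _ "x - y"]) auto
  moreover have "x \<notin> mink_in P \<gamma>"
  proof
    assume "x \<in> mink_in P \<gamma>"
    moreover have "norm ((- \<gamma>) *\<^sub>R w j) \<le> \<gamma>"
      using wn[OF j(1)] assms(3) by simp
    ultimately have "x + (- \<gamma>) *\<^sub>R w j \<in> P" unfolding mink_in_def by blast
    hence "w j \<bullet> (x + (- \<gamma>) *\<^sub>R w j) + b j \<ge> 0" using Pd j(1) by auto
    moreover have "w j \<bullet> w j = 1" using wn[OF j(1)] by (simp add: inner_commute dot_square_norm)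
    ultimately have "w j \<bullet> x + b j \<ge> \<gamma>" by (simp add: inner_diff_right)
    moreover have "\<gamma>\<^sup>2 / 2 < \<gamma>" using assms(3,4) by (simp add: power2_eq_square)
    ultimately show False using j(2) by linarith
  qed
  ultimately show "x \<in> envelope P \<gamma>" unfolding envelope_def by auto
qed

end
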